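(* Let $\mathcal{G} = (\mathcal{V}, \mathcal{E})$ be a graph and $(i,j) \in \mathcal{V} \times \mathcal{V}$ a pair of nodes of $\mathcal{G}$. Then there exist a graph $\mathcal{G}' = (\mathcal{V}', \mathcal{E}')$ not isomorphic to $\mathcal{G}$ and a pair of nodes $(i',j') \in \mathcal{V}' \times \mathcal{V}'$ such that $(P_k)_{ij} = (P'_k)_{i'j'}$ for all integers $k \geq 1$, where $P_k$ and $P'_k$ are the $k$-hop random walk matrices of $\mathcal{G}$ and $\mathcal{G}'$ respectively.
   Context: Graphs are finite and undirected, and every node has positive degree so that the random walk matrix is defined. For a graph with adjacency matrix $A$ (with $A_{ij}=1$ if $i,j$ are adjacent and $0$ otherwise) and diagonal degree matrix $D$ (with $D_{ii} = \sum_j A_{ij}$), the $k$-hop random walk matrix is $P_k = (D^{-1}A)^k$; its $(i,j)$ entry is the probability that a simple random walk of length $k$ started at $i$ ends at $j$. The graphs $\mathcal{G}$ and $\mathcal{G}'$ need not have the same number of nodes. *)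

theory Defs
  imports Complex_Main
begin

definition graph :: "'a set \<Rightarrow> ('a \<Rightarrow> 'a \<Rightarrow> bool) \<Rightarrow> bool" where
  "graph V E \<longleftrightarrow> finite V
     \<and> (\<forall>x y. E x y \<longrightarrow> x \<in> V \<and> y \<in> V)
     \<and> (\<forall>x y. E x y \<longrightarrow> E y x)
     \<and> (\<forall>x. \<not> E x x)
     \<and> (\<forall>x\<in>V. \<exists>y\<in>V. E x y)"

definition adj :: "('a \<Rightarrow> 'a \<Rightarrow> bool) \<Rightarrow> 'a \<Rightarrow> 'a \<Rightarrow> real" where
  "adj E x y = (if E x y then 1 else 0)"

definition degree :: "'a set \<Rightarrow> ('a \<Rightarrow> 'a \<Rightarrow> bool) \<Rightarrow> 'a \<Rightarrow> real" where
  "degree V E x = (\<Sum>y\<in>V. adj E x y)"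

text \<open>Entry (i,j) of the k-hop random walk matrix P_k = (D^{-1} A)^k.\<close>
fun rw_matrix :: "'a set \<Rightarrow> ('a \<Rightarrow> 'a \<Rightarrow> bool) \<Rightarrow> nat \<Rightarrow> 'a \<Rightarrow> 'a \<Rightarrow> real" where
  "rw_matrix V E 0 i j = (if i = j then 1 else 0)"
| "rw_matrix V E (Suc k) i j =
     (\<Sum>l\<in>V. (adj E i l / degree V E i) * rw_matrix V E k l j)"

definition graph_iso :: "'a set \<Rightarrow> ('a \<Rightarrow> 'a \<Rightarrow> bool) \<Rightarrow> 'b set \<Rightarrow> ('b \<Rightarrow> 'b \<Rightarrow> bool) \<Rightarrow> bool" where
  "graph_iso V E V' E' \<longleftrightarrow>
     (\<exists>f. bij_betw f V V' \<and> (\<forall>x\<in>V. \<forall>y\<in>V. E x y \<longleftrightarrow> E' (f x) (f y)))"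

end

theory Submission
  imports Defs
begin

lemma sum_embed:
  assumes "finite V'" "g ` V \<subseteq> V'" "inj_on g V"
    and "\<And>y. y \<in> V' - g ` V \<Longrightarrow> f y = (0::real)"
  shows "(\<Sum>y\<in>V'. f y) = (\<Sum>y\<in>V. f (g y))"
proof -
  have "(\<Sum>y\<in>V'. f y) = (\<Sum>y\<in>g ` V. f y)"
    using assms by (intro sum.mono_neutral_right) auto
  also have "\<dots> = (\<Sum>y\<in>V. f (g y))" using assms(3) by (simp add: sum.reindex)
  finally show ?thesis .
qed

lemma rw_embed:
  assumes "finite V'" "g ` V \<subseteq> V'" "inj_on g V"
    and EE: "\<And>x y. x \<in> V \<Longrightarrow> y \<in> V \<Longrightarrow> E' (g x) (g y) = E x y"
    and NE: "\<And>x y. x \<in> V \<Longrightarrow> y \<in> V' - g ` V \<Longrightarrow> \<not> E' (g x) y"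
    and "j \<in> V"
  shows "l \<in> V \<Longrightarrow> rw_matrix V' E' k (g l) (g j) = rw_matrix V E k l j"
proof (induction k arbitrary: l)
  case 0
  then show ?case using assms(3,6) by (auto simp: inj_on_def)
next
  case (Suc k)
  have deg: "degree V' E' (g l) = degree V E l"
    unfolding degree_def
    by (subst sum_embed[OF assms(1-3)]) (auto simp: adj_def NE Suc.prems EE)
  show ?case
    by (simp add: deg, subst sum_embed[OF assms(1-3)])
       (auto simp: adj_def NE Suc.prems EE Suc.IH)
qed

theorem proposition2:
  fixes V :: "'a set" and E :: "'a \<Rightarrow> 'a \<Rightarrow> bool" and i j :: 'a
  assumes "graph V E" and "i \<in> V" and "j \<in> V"
  shows "\<exists>(V' :: nat set) E' i' j'. graph V' E' \<and> \<not> graph_iso V E V' E'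
           \<and> i' \<in> V' \<and> j' \<in> V'
           \<and> (\<forall>k::nat. k \<ge> 1 \<longrightarrow> rw_matrix V E k i j = rw_matrix V' E' k i' j')"
proof -
  have fin: "finite V" using assms(1) by (simp add: graph_def)
  obtain g n where gV: "g ` V = {i::nat. i < n}" and inj: "inj_on g V"
    using finite_imp_inj_to_nat_seg[OF fin] by blast
  have cardV: "card V = n" using gV inj
    by (metis card_Collect_less_nat card_image)
  define h where "h = inv_into V g"
  have hg: "\<And>x. x \<in> V \<Longrightarrow> h (g x) = x" using inj by (simp add: h_def)
  define E' where "E' = (\<lambda>x y. (x < n \<and> y < n \<and> E (h x) (h y))
      \<or> (x = n \<and> y = Suc n) \<or> (x = Suc n \<and> y = n))"
  define V' where "V' = {..<Suc (Suc n)}"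
  have hV: "\<And>x. x < n \<Longrightarrow> h x \<in> V"
    using gV by (metis h_def inv_into_into mem_Collect_eq)
  have ghx: "\<And>x. x < n \<Longrightarrow> g (h x) = x"
    using gV by (metis h_def f_inv_into_f mem_Collect_eq)
  have G: "graph V' E'"
    unfolding graph_def
  proof (intro conjI allI impI ballI)
    show "finite V'" by (simp add: V'_def)
  next
    fix x y assume "E' x y" thus "x \<in> V'" "y \<in> V'" by (auto simp: E'_def V'_def)
  next
    fix x y assume "E' x y" thus "E' y x" using assms(1) by (auto simp: E'_def graph_def)
  next
    fix x show "\<not> E' x x" using assms(1) by (auto simp: E'_def graph_def)
  next
    fix x assume x: "x \<in> V'"
    show "\<exists>y\<in>V'. E' x y"
    proof (cases "x < n")
      case True
      then obtain z where z: "z \<in> V" "E (h x) z" using assms(1) hV by (meson graph_def)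
      have "g z < n" using z gV by auto
      moreover have "E' x (g z)" using True z calculation hg by (simp add: E'_def)
      ultimately show ?thesis by (auto simp: V'_def)
    next
      case False
      then have "x = n \<or> x = Suc n" using x by (auto simp: V'_def)
      thus ?thesis by (auto simp: E'_def V'_def)
    qed
  qed
  have niso: "\<not> graph_iso V E V' E'"
  proof
    assume "graph_iso V E V' E'"
    then obtain f where "bij_betw f V V'" by (auto simp: graph_iso_def)
    hence "card V = card V'" by (rule bij_betw_same_card)
    thus False using cardV by (simp add: V'_def)
  qed
  have emb: "\<And>k l. l \<in> V \<Longrightarrow> rw_matrix V' E' k (g l) (g j) = rw_matrix V E k l j"
  proof (rule rw_embed)
    show "finite V'" by (simp add: V'_def)
    show "g ` V \<subseteq> V'" using gV by (auto simp: V'_def)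
    show "inj_on g V" by (fact inj)
    show "j \<in> V" by (fact assms(3))
  next
    fix x y assume "x \<in> V" "y \<in> V"
    moreover have "g x < n" "g y < n" using gV calculation by auto
    ultimately show "E' (g x) (g y) = E x y" by (simp add: E'_def hg)
  next
    fix x y assume "x \<in> V" "y \<in> V' - g ` V"
    moreover have "g x < n" using gV calculation by auto
    ultimately show "\<not> E' (g x) y" using gV by (auto simp: E'_def)
  qed
  have "g i < n" "g j < n" using gV assms(2,3) by auto
  show ?thesis
    apply (rule exI[of _ V'], rule exI[of _ E'], rule exI[of _ "g i"], rule exI[of _ "g j"])
    using G niso emb[OF assms(2)] \<open>g i < n\<close> \<open>g j < n\<close> by (auto simp: V'_def)
qed

end
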